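(* Let $\{\mathcal N,\gamma,\boldsymbol\ell,\ell^{(2)}\}$ be null metric hypersurface data and $S$ an $(\mathfrak n-1)$-dimensional embedded submanifold of $\mathcal N$ (embedding $\psi$) everywhere transverse to $n$. For $X,Y\in\Gamma(TS)$ write uniquely ${\stackrel{\circ}{\nabla}}_XY=\nabla^S_XY+\Omega(X,Y)n$ with $\nabla^S_XY$ tangent to $S$. Let $\nabla^h$ be the Levi-Civita connection of $h=\psi^\star\gamma$. Then for all $X,Y\in\Gamma(TS)$, $$\nabla^h_XY=\nabla^S_XY-\mathbf U_\parallel(X,Y)\,\ell^\sharp_\parallel,\qquad {\stackrel{\circ}{\nabla}}_XY=\nabla^h_XY+\mathbf U_\parallel(X,Y)\,\ell^\sharp_\parallel+\Omega(X,Y)n,$$ and $$\Omega(X,Y)=\tfrac12\big((\nabla^h_X\boldsymbol\ell_\parallel)(Y)+(\nabla^h_Y\boldsymbol\ell_\parallel)(X)\big)+(\ell^{(2)}-\ell^{(2)}_\parallel)\mathbf U_\parallel(X,Y).$$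
   Context: Metric hypersurface data $\{\mathcal N,\gamma,\boldsymbol\ell,\ell^{(2)}\}$: $\mathcal N$ smooth $\mathfrak n$-manifold, $\gamma$ symmetric $2$-covariant, $\boldsymbol\ell$ a one-form, $\ell^{(2)}$ a function, such that $\boldsymbol{\mathcal A}|_p((W,a),(Z,b))=\gamma(W,Z)+a\boldsymbol\ell(Z)+b\boldsymbol\ell(W)+ab\ell^{(2)}$ is non-degenerate; its inverse $\mathcal A((\boldsymbol\alpha,a),(\boldsymbol\beta,b))=P(\boldsymbol\alpha,\boldsymbol\beta)+a\,n(\boldsymbol\beta)+b\,n(\boldsymbol\alpha)+ab\,n^{(2)}$ defines $P,n,n^{(2)}$. Null: $n^{(2)}=0$ (then $\gamma(n,\cdot)=0$, $\boldsymbol\ell(n)=1$). $\mathbf U=\frac12\pounds_n\gamma$. ${\stackrel{\circ}{\nabla}}$ is the unique torsion-free connection with $({\stackrel{\circ}{\nabla}}_X\gamma)(Z,W)=-\mathbf U(X,Z)\boldsymbol\ell(W)-\mathbf U(X,W)\boldsymbol\ell(Z)$, $({\stackrel{\circ}{\nabla}}_X\boldsymbol\ell)(Z)+({\stackrel{\circ}{\nabla}}_Z\boldsymbol\ell)(X)=-2\ell^{(2)}\mathbf U(X,Z)$. On $S$ (vectors identified with push-forwards): $h=\psi^\star\gamma$ is non-degenerate, $\boldsymbol\ell_\parallel=\psi^\star\boldsymbol\ell$, $\ell^\sharp_\parallel=h^\sharp(\boldsymbol\ell_\parallel,\cdot)$, $\ell^{(2)}_\parallel=h^\sharp(\boldsymbol\ell_\parallel,\boldsymbol\ell_\parallel)$,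 $\mathbf U_\parallel=\psi^\star\mathbf U$. *)

theory Defs
  imports "HOL-Analysis.Analysis"
begin

text \<open>The hypersurface N is (a chart domain) an open
set U of real^'n, tensors are given by components: gamma as a matrix field, the one-form
ell as a vector field (ell(W) = l p \<bullet> W), ell2 a function. S is the image of an
open set V of real^'m under psi. Connections are given by their Christoffel maps:
nabla_X Y = DY(X) + Gamma(X,Y).\<close>

definition dir :: "('a::real_normed_vector \<Rightarrow> 'b::real_normed_vector) \<Rightarrow> 'a \<Rightarrow> 'a \<Rightarrow> 'b" where
  "dir f p v = frechet_derivative f (at p) v"

definition bil :: "real^'n^'n \<Rightarrow> real^'n \<Rightarrow> real^'n \<Rightarrow> real" where
  "bil M a b = a \<bullet> (M *v b)"

definition calA :: "real^'n^'n \<Rightarrow> real^'n \<Rightarrow> real \<Rightarrow> ((real^'n) \<times> real) \<Rightarrow> ((real^'n) \<times> real) \<Rightarrow> real" where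
  "calA g l l2 u v = bil g (fst u) (fst v) + snd u * (l \<bullet> fst v) + snd v * (l \<bullet> fst u)
      + snd u * snd v * l2"

definition nondeg_A :: "real^'n^'n \<Rightarrow> real^'n \<Rightarrow> real \<Rightarrow> bool" where
  "nondeg_A g l l2 \<longleftrightarrow> (\<forall>u. (\<forall>v. calA g l l2 u v = 0) \<longrightarrow> u = 0)"

text \<open>(n, n2): the inverse form calA^{-1} evaluated on the covector (0,1), i.e. the unique
(W,a) with calA((W,a),(Z,b)) = b for all (Z,b); then calA^{-1}((0,1),(beta,b)) = beta(n) + b n2.\<close>
definition nvec :: "real^'n^'n \<Rightarrow> real^'n \<Rightarrow> real \<Rightarrow> (real^'n) \<times> real" where
  "nvec g l l2 = (THE u. \<forall>v. calA g l l2 u v = snd v)"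

definition nfield :: "(real^'n \<Rightarrow> real^'n^'n) \<Rightarrow> (real^'n \<Rightarrow> real^'n) \<Rightarrow> (real^'n \<Rightarrow> real)
    \<Rightarrow> real^'n \<Rightarrow> real^'n" where
  "nfield g l l2 p = fst (nvec (g p) (l p) (l2 p))"

definition n2field :: "(real^'n \<Rightarrow> real^'n^'n) \<Rightarrow> (real^'n \<Rightarrow> real^'n) \<Rightarrow> (real^'n \<Rightarrow> real)
    \<Rightarrow> real^'n \<Rightarrow> real" where
  "n2field g l l2 p = snd (nvec (g p) (l p) (l2 p))"

definition null_mhd :: "(real^'n) set \<Rightarrow> (real^'n \<Rightarrow> real^'n^'n) \<Rightarrow> (real^'n \<Rightarrow> real^'n)
    \<Rightarrow> (real^'n \<Rightarrow> real) \<Rightarrow> bool" where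
  "null_mhd U g l l2 \<longleftrightarrow> open U \<and>
     (\<forall>p\<in>U. transpose (g p) = g p \<and> nondeg_A (g p) (l p) (l2 p) \<and> n2field g l l2 p = 0
        \<and> g differentiable (at p) \<and> l differentiable (at p) \<and> l2 differentiable (at p))"

text \<open>U = 1/2 Lie_n gamma, evaluated on vectors a b (extended as constant coordinate fields).\<close>
definition Ufield :: "(real^'n \<Rightarrow> real^'n^'n) \<Rightarrow> (real^'n \<Rightarrow> real^'n) \<Rightarrow> (real^'n \<Rightarrow> real)
    \<Rightarrow> real^'n \<Rightarrow> real^'n \<Rightarrow> real^'n \<Rightarrow> real" where
  "Ufield g l l2 p a b = (1/2) * (dir (\<lambda>q. bil (g q) a b) p (nfield g l l2 p)
      + bil (g p) (dir (nfield g l l2) p a) b + bil (g p) a (dir (nfield g l l2) p b))"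

definition is_nabla_circ :: "(real^'n) set \<Rightarrow> (real^'n \<Rightarrow> real^'n^'n) \<Rightarrow> (real^'n \<Rightarrow> real^'n)
    \<Rightarrow> (real^'n \<Rightarrow> real) \<Rightarrow> (real^'n \<Rightarrow> real^'n \<Rightarrow> real^'n \<Rightarrow> real^'n) \<Rightarrow> bool" where
  "is_nabla_circ U g l l2 Gam \<longleftrightarrow> (\<forall>p\<in>U.
     bounded_bilinear (Gam p) \<and> (\<forall>X Z. Gam p X Z = Gam p Z X) \<and>
     (\<forall>X Z W. dir (\<lambda>q. bil (g q) Z W) p X - bil (g p) (Gam p X Z) W - bil (g p) Z (Gam p X W)
        = - Ufield g l l2 p X Z * (l p \<bullet> W) - Ufield g l l2 p X W * (l p \<bullet> Z)) \<and>
     (\<forall>X Z. (dir (\<lambda>q. l q \<bullet> Z) p X - l p \<bullet> Gam p X Z) + (dir (\<lambda>q. l q \<bullet> X) p Z - l p \<bullet> Gam p Z X)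
        = - 2 * l2 p * Ufield g l l2 p X Z))"

definition transverse_embedding :: "(real^'n) set \<Rightarrow> (real^'n \<Rightarrow> real^'n^'n) \<Rightarrow> (real^'n \<Rightarrow> real^'n)
    \<Rightarrow> (real^'n \<Rightarrow> real) \<Rightarrow> (real^'m) set \<Rightarrow> (real^'m \<Rightarrow> real^'n) \<Rightarrow> bool" where
  "transverse_embedding U g l l2 V psi \<longleftrightarrow> open V \<and> psi ` V \<subseteq> U \<and> inj_on psi V \<and>
     continuous_on (psi ` V) (inv_into V psi) \<and>
     (\<forall>q\<in>V. psi differentiable (at q) \<and> (\<forall>a. (\<lambda>r. dir psi r a) differentiable (at q)) \<and>
        inj (dir psi q) \<and>
        (\<forall>w. \<exists>a c. w = dir psi q a + c *\<^sub>R nfield g l l2 (psi q)))"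

definition hS :: "(real^'n \<Rightarrow> real^'n^'n) \<Rightarrow> (real^'m \<Rightarrow> real^'n) \<Rightarrow> real^'m \<Rightarrow> real^'m \<Rightarrow> real^'m \<Rightarrow> real" where
  "hS g psi q a b = bil (g (psi q)) (dir psi q a) (dir psi q b)"

definition is_levi_civita :: "(real^'m) set \<Rightarrow> (real^'m \<Rightarrow> real^'m \<Rightarrow> real^'m \<Rightarrow> real) \<Rightarrow>
    (real^'m \<Rightarrow> real^'m \<Rightarrow> real^'m \<Rightarrow> real^'m) \<Rightarrow> bool" where
  "is_levi_civita V h Gh \<longleftrightarrow> (\<forall>q\<in>V. bounded_bilinear (Gh q) \<and> (\<forall>a b. Gh q a b = Gh q b a) \<and>
     (\<forall>a b c. dir (\<lambda>r. h r b c) q a - h q (Gh q a b) c - h q b (Gh q a c) = 0))"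

definition lpar :: "(real^'n \<Rightarrow> real^'n) \<Rightarrow> (real^'m \<Rightarrow> real^'n) \<Rightarrow> real^'m \<Rightarrow> real^'m \<Rightarrow> real" where
  "lpar l psi q a = l (psi q) \<bullet> dir psi q a"

definition lsharp :: "(real^'n \<Rightarrow> real^'n^'n) \<Rightarrow> (real^'n \<Rightarrow> real^'n) \<Rightarrow> (real^'m \<Rightarrow> real^'n)
    \<Rightarrow> real^'m \<Rightarrow> real^'m" where
  "lsharp g l psi q = (THE v. \<forall>c. hS g psi q v c = lpar l psi q c)"

definition l2par :: "(real^'n \<Rightarrow> real^'n^'n) \<Rightarrow> (real^'n \<Rightarrow> real^'n) \<Rightarrow> (real^'m \<Rightarrow> real^'n)
    \<Rightarrow> real^'m \<Rightarrow> real" where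
  "l2par g l psi q = lpar l psi q (lsharp g l psi q)"

definition Upar :: "(real^'n \<Rightarrow> real^'n^'n) \<Rightarrow> (real^'n \<Rightarrow> real^'n) \<Rightarrow> (real^'n \<Rightarrow> real)
    \<Rightarrow> (real^'m \<Rightarrow> real^'n) \<Rightarrow> real^'m \<Rightarrow> real^'m \<Rightarrow> real^'m \<Rightarrow> real" where
  "Upar g l l2 psi q a b = Ufield g l l2 (psi q) (dir psi q a) (dir psi q b)"

definition nablaN :: "(real^'n \<Rightarrow> real^'n \<Rightarrow> real^'n \<Rightarrow> real^'n) \<Rightarrow> (real^'m \<Rightarrow> real^'n)
    \<Rightarrow> (real^'m \<Rightarrow> real^'m) \<Rightarrow> (real^'m \<Rightarrow> real^'m) \<Rightarrow> real^'m \<Rightarrow> real^'n" where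
  "nablaN Gam psi X Y q = dir (\<lambda>r. dir psi r (Y r)) q (X q)
      + Gam (psi q) (dir psi q (X q)) (dir psi q (Y q))"

definition decomp :: "(real^'n \<Rightarrow> real^'n^'n) \<Rightarrow> (real^'n \<Rightarrow> real^'n) \<Rightarrow> (real^'n \<Rightarrow> real)
    \<Rightarrow> (real^'n \<Rightarrow> real^'n \<Rightarrow> real^'n \<Rightarrow> real^'n) \<Rightarrow> (real^'m \<Rightarrow> real^'n)
    \<Rightarrow> (real^'m \<Rightarrow> real^'m) \<Rightarrow> (real^'m \<Rightarrow> real^'m) \<Rightarrow> real^'m \<Rightarrow> (real^'m) \<times> real" where
  "decomp g l l2 Gam psi X Y q = (THE vw. nablaN Gam psi X Y q
      = dir psi q (fst vw) + snd vw *\<^sub>R nfield g l l2 (psi q))"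

definition nablaS where "nablaS g l l2 Gam psi X Y q = fst (decomp g l l2 Gam psi X Y q)"
definition Omega where "Omega g l l2 Gam psi X Y q = snd (decomp g l l2 Gam psi X Y q)"

definition nablah :: "(real^'m \<Rightarrow> real^'m \<Rightarrow> real^'m \<Rightarrow> real^'m) \<Rightarrow> (real^'m \<Rightarrow> real^'m)
    \<Rightarrow> (real^'m \<Rightarrow> real^'m) \<Rightarrow> real^'m \<Rightarrow> real^'m" where
  "nablah Gh X Y q = dir Y q (X q) + Gh q (X q) (Y q)"

definition cov_lpar :: "(real^'m \<Rightarrow> real^'m \<Rightarrow> real^'m \<Rightarrow> real^'m) \<Rightarrow> (real^'n \<Rightarrow> real^'n)
    \<Rightarrow> (real^'m \<Rightarrow> real^'n) \<Rightarrow> real^'m \<Rightarrow> real^'m \<Rightarrow> real^'m \<Rightarrow> real" where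
  "cov_lpar Gh l psi q a b = dir (\<lambda>r. lpar l psi r b) q a - lpar l psi q (Gh q a b)"

end

theory Submission
  imports Defs
begin


lemma dq: "dist q (q + v) = norm (v::'a::real_normed_vector)" by (simp add: dist_norm)

lemma schwarz_half:
  fixes f :: "'a::real_normed_vector \<Rightarrow> 'b::real_inner"
  assumes V: "open V" "q \<in> V" and df: "\<And>r. r \<in> V \<Longrightarrow> (f has_derivative f' r) (at r)"
    and dfa: "((\<lambda>r. f' r a) has_derivative Ha) (at q)" and e: "e > 0"
  shows "\<exists>d>0. \<forall>t. 0 < t \<and> t < d \<longrightarrow>
     norm (f (q + t *\<^sub>R a + t *\<^sub>R b) - f (q + t *\<^sub>R a) - f (q + t *\<^sub>R b) + f q - (t*t) *\<^sub>R Ha b) \<le> e * (t*t)"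
proof -
  define C where "C = norm a + norm b + 1"
  have C: "C > 0" unfolding C_def by (simp add: add_nonneg_pos)
  define e' where "e' = e / (2*C)"
  have e': "e' > 0" using e C by (simp add: e'_def)
  have blH: "bounded_linear Ha" using dfa has_derivative_bounded_linear by blast
  obtain d1 where d1: "d1 > 0" and d1b: "\<And>y. norm (y - q) < d1 \<Longrightarrow> norm (f' y a - f' q a - Ha (y - q)) \<le> e' * norm (y - q)"
    using dfa e' unfolding has_derivative_at_alt by blast
  obtain d2 where d2: "d2 > 0" and d2b: "ball q d2 \<subseteq> V"
    using V open_contains_ball by blast
  define d where "d = min d1 d2 / C"
  have d: "d > 0" using d1 d2 C by (simp add: d_def)
  show ?thesis
  proof (intro exI[of _ d] conjI allI impI d)
    fix t :: real assume t: "0 < t \<and> t < d"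
    have tC: "t * C < min d1 d2" using t C by (simp add: d_def pos_less_divide_eq)
    have nb: "norm (s *\<^sub>R a + t *\<^sub>R b) \<le> t * C" "norm (s *\<^sub>R a) \<le> t * C" if "0 \<le> s" "s \<le> t" for s
    proof -
      have "norm (s *\<^sub>R a + t *\<^sub>R b) \<le> s * norm a + t * norm b"
        using norm_triangle_ineq[of "s *\<^sub>R a" "t *\<^sub>R b"] that t by simp
      also have "\<dots> \<le> t * C"
      proof -
        have "s * norm a \<le> t * norm a" by (rule mult_right_mono) (use that in auto)
        then show ?thesis using t unfolding C_def distrib_left by linarith
      qed
      finally show "norm (s *\<^sub>R a + t *\<^sub>R b) \<le> t * C" .
      have "norm (s *\<^sub>R a) = s * norm a" using that by simp
      also have "\<dots> \<le> t * C"
      proof -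
        have "s * norm a \<le> t * norm a" by (rule mult_right_mono) (use that in auto)
        moreover have "0 \<le> t * norm b" using t by simp
        ultimately show ?thesis using t unfolding C_def distrib_left by linarith
      qed
      finally show "norm (s *\<^sub>R a) \<le> t * C" .
    qed
    define \<phi> where "\<phi> s = f (q + s *\<^sub>R a + t *\<^sub>R b) - f (q + s *\<^sub>R a) - s *\<^sub>R (t *\<^sub>R Ha b)" for s
    define \<phi>' where "\<phi>' s = (\<lambda>h. h *\<^sub>R (f' (q + s *\<^sub>R a + t *\<^sub>R b) a - f' (q + s *\<^sub>R a) a - t *\<^sub>R Ha b))" for s
    have inV: "q + s *\<^sub>R a + t *\<^sub>R b \<in> V" "q + s *\<^sub>R a \<in> V" if "0 \<le> s" "s \<le> t" for s
    proof -
      have "dist q (q + s *\<^sub>R a + t *\<^sub>R b) = norm (s *\<^sub>R a + t *\<^sub>R b)"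
        using dq[of q "s *\<^sub>R a + t *\<^sub>R b"] by (simp only: add.assoc)
      then have "dist q (q + s *\<^sub>R a + t *\<^sub>R b) < d2" using nb(1)[OF that] tC by linarith
      then show "q + s *\<^sub>R a + t *\<^sub>R b \<in> V" using d2b by auto
      have "dist q (q + s *\<^sub>R a) < d2" using nb(2)[OF that] tC dq[of q "s *\<^sub>R a"] by linarith
      then show "q + s *\<^sub>R a \<in> V" using d2b by auto
    qed
    have der: "(\<phi> has_derivative \<phi>' s) (at s)" if "0 \<le> s" "s \<le> t" for s
    proof -
      have l1: "linear (f' (q + s *\<^sub>R a + t *\<^sub>R b))" "linear (f' (q + s *\<^sub>R a))"
        using df[OF inV(1)[OF that]] df[OF inV(2)[OF that]] has_derivative_linear by blast+
      have i1: "((\<lambda>s. q + s *\<^sub>R a + t *\<^sub>R b) has_derivative (\<lambda>h. h *\<^sub>R a)) (at s)"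
        by (auto intro!: derivative_eq_intros)
      have i2: "((\<lambda>s. q + s *\<^sub>R a) has_derivative (\<lambda>h. h *\<^sub>R a)) (at s)"
        by (auto intro!: derivative_eq_intros)
      have h1: "((\<lambda>s. f (q + s *\<^sub>R a + t *\<^sub>R b)) has_derivative (\<lambda>h. f' (q + s *\<^sub>R a + t *\<^sub>R b) (h *\<^sub>R a))) (at s)"
        using has_derivative_compose[OF i1 df[OF inV(1)[OF that]]] by simp
      have h2: "((\<lambda>s. f (q + s *\<^sub>R a)) has_derivative (\<lambda>h. f' (q + s *\<^sub>R a) (h *\<^sub>R a))) (at s)"
        using has_derivative_compose[OF i2 df[OF inV(2)[OF that]]] by simp
      have "(\<phi> has_derivative (\<lambda>h. f' (q + s *\<^sub>R a + t *\<^sub>R b) (h *\<^sub>R a) - f' (q + s *\<^sub>R a) (h *\<^sub>R a) - h *\<^sub>R (t *\<^sub>R Ha b))) (at s)"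
        unfolding \<phi>_def by (intro has_derivative_diff h1 h2 has_derivative_scaleR_left has_derivative_ident)
      then show ?thesis unfolding \<phi>'_def
        by (simp add: linear_scale[OF l1(1)] linear_scale[OF l1(2)] scaleR_diff_right)
    qed
    have cont: "continuous_on {0..t} \<phi>"
      using der by (intro continuous_at_imp_continuous_on ballI) (auto intro: has_derivative_continuous)
    obtain x where x: "x \<in> {0<..<t}" and mv: "norm (\<phi> t - \<phi> 0) \<le> norm (\<phi>' x (t - 0))"
      using mvt_general[of 0 t \<phi> \<phi>'] t cont der by auto
    have x0: "0 \<le> x" "x \<le> t" using x by auto
    have "f' (q + x *\<^sub>R a + t *\<^sub>R b) a - f' (q + x *\<^sub>R a) a - t *\<^sub>R Ha b
       = (f' (q + x *\<^sub>R a + t *\<^sub>R b) a - f' q a - Ha ((q + x *\<^sub>R a + t *\<^sub>R b) - q))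
       - (f' (q + x *\<^sub>R a) a - f' q a - Ha ((q + x *\<^sub>R a) - q))"
      using bounded_linear.linear[OF blH] by (simp add: add.assoc linear_add linear_scale)
    then have "norm (f' (q + x *\<^sub>R a + t *\<^sub>R b) a - f' (q + x *\<^sub>R a) a - t *\<^sub>R Ha b)
       \<le> norm (f' (q + x *\<^sub>R a + t *\<^sub>R b) a - f' q a - Ha ((q + x *\<^sub>R a + t *\<^sub>R b) - q))
       + norm (f' (q + x *\<^sub>R a) a - f' q a - Ha ((q + x *\<^sub>R a) - q))"
      by (metis norm_triangle_ineq4)
    also have "\<dots> \<le> e' * (t * C) + e' * (t * C)"
    proof (rule add_mono)
      have n1: "norm ((q + x *\<^sub>R a + t *\<^sub>R b) - q) \<le> t * C" using nb(1)[OF x0] by (simp add: add.assoc)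
      show "norm (f' (q + x *\<^sub>R a + t *\<^sub>R b) a - f' q a - Ha ((q + x *\<^sub>R a + t *\<^sub>R b) - q)) \<le> e' * (t * C)"
        using d1b[of "q + x *\<^sub>R a + t *\<^sub>R b"] n1 tC e' mult_left_mono[OF n1, of e'] by linarith
      have n2: "norm ((q + x *\<^sub>R a) - q) \<le> t * C" using nb(2)[OF x0] by simp
      show "norm (f' (q + x *\<^sub>R a) a - f' q a - Ha ((q + x *\<^sub>R a) - q)) \<le> e' * (t * C)"
        using d1b[of "q + x *\<^sub>R a"] n2 tC e' mult_left_mono[OF n2, of e'] by linarith
    qed
    also have "\<dots> = e * t" using C by (simp add: e'_def field_simps)
    finally have bnd: "norm (f' (q + x *\<^sub>R a + t *\<^sub>R b) a - f' (q + x *\<^sub>R a) a - t *\<^sub>R Ha b) \<le> e * t" .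
    have "norm (\<phi>' x (t - 0)) = t * norm (f' (q + x *\<^sub>R a + t *\<^sub>R b) a - f' (q + x *\<^sub>R a) a - t *\<^sub>R Ha b)"
      using t by (simp add: \<phi>'_def)
    also have "\<dots> \<le> t * (e * t)" using bnd t by (simp add: mult_left_mono)
    finally have "norm (\<phi> t - \<phi> 0) \<le> e * (t * t)" using mv by (simp add: algebra_simps)
    moreover have "\<phi> t - \<phi> 0 = f (q + t *\<^sub>R a + t *\<^sub>R b) - f (q + t *\<^sub>R a) - f (q + t *\<^sub>R b) + f q - (t*t) *\<^sub>R Ha b"
      by (simp add: \<phi>_def algebra_simps)
    ultimately show "norm (f (q + t *\<^sub>R a + t *\<^sub>R b) - f (q + t *\<^sub>R a) - f (q + t *\<^sub>R b) + f q - (t*t) *\<^sub>R Ha b) \<le> e * (t*t)"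
      by simp
  qed
qed

lemma schwarz:
  fixes f :: "'a::real_normed_vector \<Rightarrow> 'b::real_inner"
  assumes V: "open V" "q \<in> V" and df: "\<And>r. r \<in> V \<Longrightarrow> (f has_derivative f' r) (at r)"
    and da: "((\<lambda>r. f' r a) has_derivative Ha) (at q)"
    and db: "((\<lambda>r. f' r b) has_derivative Hb) (at q)"
  shows "Ha b = Hb a"
proof -
  have main: "norm (Ha b - Hb a) \<le> 2*e" if e: "e>0" for e
  proof -
    obtain d1 where d1: "d1 > 0" and H1: "\<And>t. 0 < t \<and> t < d1 \<Longrightarrow>
     norm (f (q + t *\<^sub>R a + t *\<^sub>R b) - f (q + t *\<^sub>R a) - f (q + t *\<^sub>R b) + f q - (t*t) *\<^sub>R Ha b) \<le> e * (t*t)"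
      using schwarz_half[OF V df da e, of b] by blast
    obtain d2 where d2: "d2 > 0" and H2: "\<And>t. 0 < t \<and> t < d2 \<Longrightarrow>
     norm (f (q + t *\<^sub>R b + t *\<^sub>R a) - f (q + t *\<^sub>R b) - f (q + t *\<^sub>R a) + f q - (t*t) *\<^sub>R Hb a) \<le> e * (t*t)"
      using schwarz_half[OF V df db e, of a] by blast
    define t where "t = min d1 d2 / 2"
    have t: "0 < t" "t < d1" "t < d2" using d1 d2 by (auto simp: t_def)
    define D where "D = f (q + t *\<^sub>R a + t *\<^sub>R b) - f (q + t *\<^sub>R a) - f (q + t *\<^sub>R b) + f q"
    have A: "norm (D - (t*t) *\<^sub>R Ha b) \<le> e * (t*t)" using H1 t unfolding D_def by blast
    have "f (q + t *\<^sub>R b + t *\<^sub>R a) - f (q + t *\<^sub>R b) - f (q + t *\<^sub>R a) + f q = D"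
      unfolding D_def by (simp add: algebra_simps)
    then have B: "norm (D - (t*t) *\<^sub>R Hb a) \<le> e * (t*t)" using H2 t by metis
    have "(t*t) *\<^sub>R (Ha b - Hb a) = (D - (t*t) *\<^sub>R Hb a) - (D - (t*t) *\<^sub>R Ha b)"
      by (simp add: algebra_simps)
    then have "norm ((t*t) *\<^sub>R (Ha b - Hb a)) \<le> norm (D - (t*t) *\<^sub>R Hb a) + norm (D - (t*t) *\<^sub>R Ha b)"
      by (metis norm_triangle_ineq4)
    also have "\<dots> \<le> (2*e) * (t*t)" using A B by simp
    finally have "(t*t) * norm (Ha b - Hb a) \<le> (t*t) * (2*e)" using t by (simp add: mult.commute)
    then show ?thesis using t by (simp add: mult_le_cancel_left_pos)
  qed
  show ?thesis
  proof (rule ccontr)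
    assume "Ha b \<noteq> Hb a"
    then have "norm (Ha b - Hb a) > 0" by simp
    with main[of "norm (Ha b - Hb a) / 4"] show False by simp
  qed
qed



lemma dir_local:
  assumes "open S" "x \<in> S" "\<And>y. y \<in> S \<Longrightarrow> f y = g y"
  shows "dir f x = dir g x"
proof -
  have "\<And>f'. (f has_derivative f') (at x) = (g has_derivative f') (at x)"
    using assms has_derivative_transform_within_open[of f _ x UNIV S g]
      has_derivative_transform_within_open[of g _ x UNIV S f] by metis
  then show ?thesis unfolding dir_def frechet_derivative_def by simp
qed

lemma bb_mv: "bounded_bilinear (\<lambda>(M::real^'n^'m) v. M *v v)"
  unfolding bilinear_conv_bounded_bilinear[symmetric] bilinear_def
  by (auto intro!: linearI simp: matrix_vector_mult_add_rdistrib matrix_vector_right_distrib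
      matrix_scaleR_vector_ac scaleR_matrix_vector_assoc)

lemma bil_add1: "bil M (a + b) c = bil M a c + bil M b c" by (simp add: bil_def inner_add_left)
lemma bil_add2: "bil M a (b + c) = bil M a b + bil M a c"
  by (simp add: bil_def matrix_vector_right_distrib inner_add_right)
lemma bil_scale1: "bil M (r *\<^sub>R a) c = r * bil M a c" by (simp add: bil_def)
lemma bil_scale2: "bil M a (r *\<^sub>R c) = r * bil M a c"
  by (simp add: bil_def linear_scale[OF matrix_vector_mul_linear])
lemma bil_diff1: "bil M (a - b) c = bil M a c - bil M b c" by (simp add: bil_def inner_diff_left)
lemma bil_diff2: "bil M a (b - c) = bil M a b - bil M a c"
  by (simp add: bil_def matrix_vector_mult_diff_distrib inner_diff_right)
lemma bil_zero1: "bil M 0 c = 0" by (simp add: bil_def)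
lemma bil_zero2: "bil M a 0 = 0" by (simp add: bil_def)
lemma bil_sym: "transpose M = M \<Longrightarrow> bil M a b = bil M b a"
  unfolding bil_def by (metis dot_lmul_matrix inner_commute transpose_matrix_vector)

lemma bil_deriv:
  assumes "(M has_derivative M') (at x within s)" "(A has_derivative A') (at x within s)"
    "(B has_derivative B') (at x within s)"
  shows "((\<lambda>r. bil (M r) (A r) (B r)) has_derivative
     (\<lambda>h. bil (M' h) (A x) (B x) + bil (M x) (A' h) (B x) + bil (M x) (A x) (B' h))) (at x within s)"
proof -
  have mv: "((\<lambda>r. M r *v B r) has_derivative (\<lambda>h. M x *v B' h + M' h *v B x)) (at x within s)"
    using bounded_bilinear.FDERIV[OF bb_mv assms(1,3)] by simp
  have "((\<lambda>r. A r \<bullet> (M r *v B r)) has_derivative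
      (\<lambda>h. A x \<bullet> (M x *v B' h + M' h *v B x) + A' h \<bullet> (M x *v B x))) (at x within s)"
    using has_derivative_inner[OF assms(2) mv] by simp
  then show ?thesis unfolding bil_def
    by (rule has_derivative_eq_rhs) (auto simp: inner_add_right algebra_simps)
qed

lemma linear_repr:
  fixes \<phi> :: "'a::euclidean_space \<Rightarrow> real"
  assumes "linear \<phi>"
  shows "\<phi> v = (\<Sum>b\<in>Basis. \<phi> b *\<^sub>R b) \<bullet> v"
proof -
  have "\<phi> v = \<phi> (\<Sum>b\<in>Basis. (v \<bullet> b) *\<^sub>R b)" by (simp add: euclidean_representation)
  also have "\<dots> = (\<Sum>b\<in>Basis. (v \<bullet> b) * \<phi> b)" using assms by (simp add: linear_sum linear_scale)
  also have "\<dots> = (\<Sum>b\<in>Basis. \<phi> b * (b \<bullet> v))" by (simp add: inner_commute mult.commute)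
  also have "\<dots> = (\<Sum>b\<in>Basis. \<phi> b *\<^sub>R b) \<bullet> v" by (simp add: inner_sum_left)
  finally show ?thesis .
qed

lemma riesz_nondeg:
  fixes B :: "'a::euclidean_space \<Rightarrow> 'a \<Rightarrow> real"
  assumes bl: "bilinear B" and nd: "\<And>u. (\<forall>v. B u v = 0) \<Longrightarrow> u = 0" and lp: "linear \<phi>"
  shows "\<exists>!u. \<forall>v. B u v = \<phi> v"
proof -
  define f where "f u = (\<Sum>b\<in>Basis. B u b *\<^sub>R b)" for u
  have l1: "linear (\<lambda>u. B u v)" for v using bl unfolding bilinear_def by blast
  have l2: "linear (B u)" for u using bl unfolding bilinear_def by blast
  have fB: "f u \<bullet> v = B u v" for u v
    unfolding f_def by (rule sym, rule linear_repr[OF l2])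
  have lf: "linear f"
    unfolding f_def by (intro linearI) (simp_all add: linear_add[OF l1] linear_scale[OF l1] scaleR_add_left sum.distrib scaleR_sum_right)
  have "inj f"
  proof (rule linear_injective_0[OF lf, THEN iffD2], intro allI impI)
    fix u assume "f u = 0" then show "u = 0" using nd fB by (metis inner_zero_left)
  qed
  then have "surj f" using linear_injective_imp_surjective[OF lf] by blast
  then obtain u where u: "f u = (\<Sum>b\<in>Basis. \<phi> b *\<^sub>R b)" by (metis surjD)
  have ex: "\<forall>v. B u v = \<phi> v" using fB u linear_repr[OF lp] by metis
  show ?thesis
  proof (rule ex1I[of _ u])
    show "\<forall>v. B u v = \<phi> v" by fact
    fix u' assume "\<forall>v. B u' v = \<phi> v"
    then have "\<forall>v. B (u' - u) v = 0" using ex by (simp add: linear_diff[OF l1])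
    then show "u' = u" using nd by fastforce
  qed
qed

lemma lin_field_deriv:
  fixes F :: "real^'m \<Rightarrow> real^'m \<Rightarrow> 'b::real_normed_vector"
  assumes V: "open V" "q \<in> V" and lin: "\<And>r. r \<in> V \<Longrightarrow> linear (F r)"
    and dF: "\<And>i. ((\<lambda>r. F r (axis i 1)) has_derivative DF i) (at q)"
    and dY: "(Y has_derivative DY) (at q)"
  shows "((\<lambda>r. F r (Y r)) has_derivative (\<lambda>a. F q (DY a) + (\<Sum>i\<in>UNIV. (Y q)$i *\<^sub>R DF i a))) (at q)"
proof -
  have exp: "F r w = (\<Sum>i\<in>UNIV. w$i *\<^sub>R F r (axis i 1))" if "r \<in> V" for r w
  proof -
    have "F r w = F r (\<Sum>i\<in>UNIV. w$i *\<^sub>R axis i 1)" using basis_expansion[of w] by (simp add: scalar_mult_eq_scaleR)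
    also have "\<dots> = (\<Sum>i\<in>UNIV. w$i *\<^sub>R F r (axis i 1))" using lin[OF that] by (simp add: linear_sum linear_scale)
    finally show ?thesis .
  qed
  have dYi: "((\<lambda>r. (Y r)$i) has_derivative (\<lambda>a. (DY a)$i)) (at q)" for i
    using bounded_linear.has_derivative[OF bounded_linear_vec_nth dY] .
  have "((\<lambda>r. \<Sum>i\<in>UNIV. (Y r)$i *\<^sub>R F r (axis i 1)) has_derivative
      (\<lambda>a. \<Sum>i\<in>UNIV. (Y q)$i *\<^sub>R DF i a + (DY a)$i *\<^sub>R F q (axis i 1))) (at q)"
    by (intro has_derivative_sum has_derivative_scaleR dYi dF)
  then have "((\<lambda>r. F r (Y r)) has_derivative
      (\<lambda>a. \<Sum>i\<in>UNIV. (Y q)$i *\<^sub>R DF i a + (DY a)$i *\<^sub>R F q (axis i 1))) (at q)"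
    by (rule has_derivative_transform_within_open[OF _ V]) (metis exp)
  moreover have "(\<lambda>a. \<Sum>i\<in>UNIV. (Y q)$i *\<^sub>R DF i a + (DY a)$i *\<^sub>R F q (axis i 1))
      = (\<lambda>a. F q (DY a) + (\<Sum>i\<in>UNIV. (Y q)$i *\<^sub>R DF i a))"
  proof (rule ext)
    fix a
    show "(\<Sum>i\<in>UNIV. (Y q)$i *\<^sub>R DF i a + (DY a)$i *\<^sub>R F q (axis i 1))
        = F q (DY a) + (\<Sum>i\<in>UNIV. (Y q)$i *\<^sub>R DF i a)"
      unfolding exp[OF V(2), of "DY a"] sum.distrib by (simp add: add.commute)
  qed
  ultimately show ?thesis by simp
qed

lemma Ufield_sym:
  assumes "open U" "p \<in> U" "\<forall>p\<in>U. transpose (g p) = g p"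
  shows "Ufield g l l2 p a b = Ufield g l l2 p b a"
proof -
  have "dir (\<lambda>q. bil (g q) a b) p = dir (\<lambda>q. bil (g q) b a) p"
    using assms by (intro dir_local[of U]) (auto intro: bil_sym)
  moreover have s: "bil (g p) x y = bil (g p) y x" for x y using assms bil_sym by blast
  ultimately show ?thesis unfolding Ufield_def
    using s[of "dir (nfield g l l2) p a" b] s[of a "dir (nfield g l l2) p b"] by simp
qed

lemma bilinear_calA: "bilinear (calA G L c)"
  unfolding bilinear_def calA_def
  by (auto intro!: linearI simp: bil_add1 bil_add2 bil_scale1 bil_scale2 inner_add_right inner_add_left algebra_simps)

lemma nvec_works:
  assumes "nondeg_A G L c"
  shows "\<forall>v. calA G L c (nvec G L c) v = snd v"
proof -
  have "\<exists>!u. \<forall>v. calA G L c u v = snd v"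
    using assms unfolding nondeg_A_def
    by (intro riesz_nondeg bilinear_calA) (auto intro: linearI)
  then show ?thesis unfolding nvec_def by (rule theI')
qed

lemma not_in_range:
  fixes P :: "real^'m \<Rightarrow> real^'n"
  assumes lP: "linear P" and dim: "CARD('n) = CARD('m) + 1" and sp: "\<forall>w. \<exists>a c. w = P a + c *\<^sub>R nn"
  shows "P a \<noteq> nn"
proof
  assume a: "P a = nn"
  have "range P = UNIV"
  proof (intro set_eqI iffI)
    fix w :: "real^'n"
    obtain b c where "w = P b + c *\<^sub>R nn" using sp by blast
    then have "w = P (b + c *\<^sub>R a)" using a lP by (simp add: linear_add linear_scale)
    then show "w \<in> range P" by blast
  qed auto
  then have "dim (UNIV::(real^'n) set) \<le> dim (UNIV::(real^'m) set)"
    using dim_image_le[OF lP, of UNIV] by simp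
  then show False using dim by (simp add: dim_UNIV)
qed


lemma dir_eq: "dir f p = frechet_derivative f (at p)" by (rule ext) (simp add: dir_def)
lemma dir_works: "f differentiable (at x) \<Longrightarrow> (f has_derivative dir f x) (at x)"
  by (simp add: dir_eq frechet_derivative_works)
lemma dir_unique: "(f has_derivative f') (at x) \<Longrightarrow> dir f x = f'"
  by (metis dir_eq frechet_derivative_at)


theorem lemma3p14:
  fixes U :: "(real^'n) set" and g :: "real^'n \<Rightarrow> real^'n^'n" and l :: "real^'n \<Rightarrow> real^'n"
    and l2 :: "real^'n \<Rightarrow> real" and Gam :: "real^'n \<Rightarrow> real^'n \<Rightarrow> real^'n \<Rightarrow> real^'n"
    and V :: "(real^'m) set" and psi :: "real^'m \<Rightarrow> real^'n"
    and Gh :: "real^'m \<Rightarrow> real^'m \<Rightarrow> real^'m \<Rightarrow> real^'m"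
    and X Y :: "real^'m \<Rightarrow> real^'m" and q :: "real^'m"
  assumes dim: "CARD('n) = CARD('m) + 1"
    and data: "null_mhd U g l l2"
    and circ: "is_nabla_circ U g l l2 Gam"
    and emb: "transverse_embedding U g l l2 V psi"
    and lc: "is_levi_civita V (hS g psi) Gh"
    and XY: "\<forall>r\<in>V. X differentiable (at r) \<and> Y differentiable (at r)"
    and q: "q \<in> V"
  shows "(nablah Gh X Y q = nablaS g l l2 Gam psi X Y q
            - Upar g l l2 psi q (X q) (Y q) *\<^sub>R lsharp g l psi q)
         \<and> (nablaN Gam psi X Y q = dir psi q (nablah Gh X Y q + Upar g l l2 psi q (X q) (Y q) *\<^sub>R lsharp g l psi q)
            + Omega g l l2 Gam psi X Y q *\<^sub>R nfield g l l2 (psi q))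
         \<and> (Omega g l l2 Gam psi X Y q
           = (1/2) * (cov_lpar Gh l psi q (X q) (Y q) + cov_lpar Gh l psi q (Y q) (X q))
             + (l2 (psi q) - l2par g l psi q) * Upar g l l2 psi q (X q) (Y q))"
  proof -
  define p0 where "p0 = psi q"
  define G0 where "G0 = g p0"
  define L0 where "L0 = l p0"
  define nn where "nn = nfield g l l2 p0"
  define P where "P = dir psi q"
  define G' where "G' = dir g p0"
  define L' where "L' = dir l p0"
  define Hd where "Hd b = dir (\<lambda>r. dir psi r b) q" for b
  define U0 where "U0 = Upar g l l2 psi q"
  define hq where "hq = hS g psi q"
  define lp where "lp = lpar l psi q"
  define ls where "ls = lsharp g l psi q"
  from data have openU: "open U" and symg: "\<forall>p\<in>U. transpose (g p) = g p"
    and ndA: "\<And>p. p\<in>U \<Longrightarrow> nondeg_A (g p) (l p) (l2 p)"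
    and n20: "\<And>p. p\<in>U \<Longrightarrow> n2field g l l2 p = 0" and dg: "\<And>p. p\<in>U \<Longrightarrow> g differentiable (at p)"
    and dl: "\<And>p. p\<in>U \<Longrightarrow> l differentiable (at p)" unfolding null_mhd_def by auto
  from emb have openV: "open V" and psiU: "psi ` V \<subseteq> U"
    and dpsi: "\<And>r. r\<in>V \<Longrightarrow> psi differentiable (at r)"
    and ddpsi: "\<And>r a. r\<in>V \<Longrightarrow> (\<lambda>r'. dir psi r' a) differentiable (at r)"
    and injP: "inj (dir psi q)" and span: "\<forall>w. \<exists>a c. w = dir psi q a + c *\<^sub>R nfield g l l2 (psi q)"
    unfolding transverse_embedding_def using q by auto
  have p0U: "p0 \<in> U" using psiU q p0_def by auto
  have symG: "transpose G0 = G0" using symg p0U G0_def by auto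
  have Gam_sym: "Gam p0 x y = Gam p0 y x" for x y using circ p0U unfolding is_nabla_circ_def by blast
  have circ1a: "dir (\<lambda>q. bil (g q) Z W) p0 X - bil G0 (Gam p0 X Z) W - bil G0 Z (Gam p0 X W)
        = - Ufield g l l2 p0 X Z * (L0 \<bullet> W) - Ufield g l l2 p0 X W * (L0 \<bullet> Z)" for X Z W
    using circ p0U unfolding is_nabla_circ_def G0_def L0_def by blast
  have circ2a: "(dir (\<lambda>q. l q \<bullet> Z) p0 X - L0 \<bullet> Gam p0 X Z) + (dir (\<lambda>q. l q \<bullet> X) p0 Z - L0 \<bullet> Gam p0 Z X)
        = - 2 * l2 p0 * Ufield g l l2 p0 X Z" for X Z
    using circ p0U unfolding is_nabla_circ_def L0_def by blast
  have Ghq: "Gh q a b = Gh q b a" for a b using lc q unfolding is_levi_civita_def by blast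
  have LC: "dir (\<lambda>r. hS g psi r b c) q a - hq (Gh q a b) c - hq b (Gh q a c) = 0" for a b c
    using lc q unfolding is_levi_civita_def hq_def by blast
  have nv: "\<forall>v. calA G0 L0 (l2 p0) (nn, 0) v = snd v"
  proof -
    have "nvec G0 L0 (l2 p0) = (nn, 0)" using n20[OF p0U]
      unfolding nn_def nfield_def n2field_def G0_def L0_def by (metis prod.collapse)
    then show ?thesis using nvec_works[OF ndA[OF p0U]] unfolding G0_def L0_def by metis
  qed
  have gn: "bil G0 nn Z = 0" for Z using nv[rule_format, of "(Z,0)"] by (simp add: calA_def)
  have ln: "L0 \<bullet> nn = 1" using nv[rule_format, of "(0,1)"] by (simp add: calA_def bil_zero2)
  have gn2: "bil G0 Z nn = 0" for Z using gn bil_sym[OF symG] by metis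
  have rad: "W = (L0 \<bullet> W) *\<^sub>R nn" if "\<forall>Z. bil G0 W Z = 0" for W
  proof -
    have "calA G0 L0 (l2 p0) (W - (L0 \<bullet> W) *\<^sub>R nn, 0) v = 0" for v
      using that gn ln by (simp add: calA_def bil_diff1 bil_scale1 inner_diff_right)
    then have "(W - (L0 \<bullet> W) *\<^sub>R nn, 0) = (0::(real^'n) \<times> real)"
      using ndA[OF p0U] unfolding nondeg_A_def G0_def L0_def by blast
    then show ?thesis by (auto simp: zero_prod_def)
  qed
  have dpsi_has: "(psi has_derivative dir psi r) (at r)" if "r \<in> V" for r
    using dpsi[OF that] by (rule dir_works)
  have linV: "linear (dir psi r)" if "r \<in> V" for r
    using dpsi_has[OF that] has_derivative_linear by blast
  have linP: "linear P" unfolding P_def using linV[OF q] .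
  have spanP: "\<forall>w. \<exists>a c. w = P a + c *\<^sub>R nn" using span unfolding P_def nn_def p0_def .
  have nnP: "P a \<noteq> nn" for a using not_in_range[OF linP dim spanP] .
  have injP': "a = b" if "P a = P b" for a b using injP that unfolding P_def by (simp add: inj_eq)
  have uniq: "a = a' \<and> c = c'" if "P a + c *\<^sub>R nn = P a' + c' *\<^sub>R nn" for a a' c c'
  proof -
    have e: "P (a - a') = (c' - c) *\<^sub>R nn" using that linP by (simp add: linear_diff algebra_simps)
    show ?thesis
    proof (cases "c' = c")
      case True then have "P (a - a') = P 0" using e linP by (simp add: linear_0)
      then have "a - a' = 0" using injP' by blast
      then show ?thesis using True by simp
    next
      case False
      then have "P ((1/(c'-c)) *\<^sub>R (a - a')) = nn" using e linP by (simp add: linear_scale)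
      then show ?thesis using nnP by blast
    qed
  qed
  have hq': "hq a b = bil G0 (P a) (P b)" for a b unfolding hq_def hS_def G0_def p0_def P_def by simp
  have h_sym: "hq a b = hq b a" for a b using bil_sym[OF symG] hq' by metis
  have lin_h1: "linear (\<lambda>a. hq a b)" for b
    by (intro linearI) (simp_all add: hq' linear_add[OF linP] linear_scale[OF linP] bil_add1 bil_scale1)
  have lin_h2: "linear (hq a)" for a
    by (intro linearI) (simp_all add: hq' linear_add[OF linP] linear_scale[OF linP] bil_add2 bil_scale2)
  have bil_h: "bilinear hq" unfolding bilinear_def using lin_h1 lin_h2 by blast
  have h_nd: "v = 0" if "\<forall>c. hq v c = 0" for v
  proof -
    have "bil G0 (P v) W = 0" for W
    proof -
      obtain a c where "W = P a + c *\<^sub>R nn" using spanP by blast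
      then show ?thesis using that[rule_format, of a] hq' gn2 by (simp add: bil_add2 bil_scale2)
    qed
    then have e: "P v = (L0 \<bullet> P v) *\<^sub>R nn" using rad by blast
    show "v = 0"
    proof (cases "L0 \<bullet> P v = 0")
      case True then have "P v = P 0" using e linP by (simp add: linear_0)
      then show ?thesis using injP' by blast
    next
      case False
      define c where "c = L0 \<bullet> P v"
      have c0: "c \<noteq> 0" using False c_def by simp
      have e': "P v = c *\<^sub>R nn" using e c_def by metis
      have "P ((1/c) *\<^sub>R v) = (1/c) *\<^sub>R (c *\<^sub>R nn)" using linP e' by (simp add: linear_scale)
      also have "\<dots> = nn" using c0 by simp
      finally show ?thesis using nnP by blast
    qed
  qed
  have lp': "lp a = L0 \<bullet> P a" for a unfolding lp_def lpar_def L0_def p0_def P_def by simp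
  have lin_lp: "linear lp"
    by (intro linearI) (simp_all add: lp' linear_add[OF linP] linear_scale[OF linP] inner_add_right)
  have ls_prop: "hq ls c = lp c" for c
  proof -
    have "\<exists>!v. \<forall>c. hq v c = lp c" by (rule riesz_nondeg[OF bil_h h_nd lin_lp]) blast
    then have "\<forall>c. hq ls c = lp c" unfolding ls_def lsharp_def hq_def lp_def by (rule theI')
    then show ?thesis by blast
  qed
  have U0_sym: "U0 a b = U0 b a" for a b
    unfolding U0_def Upar_def using Ufield_sym[OF openU _ symg] psiU q by auto
  have U0': "U0 a b = Ufield g l l2 p0 (P a) (P b)" for a b unfolding U0_def Upar_def p0_def P_def ..
  have Hd_has: "((\<lambda>r. dir psi r b) has_derivative Hd b) (at q)" for b
    unfolding Hd_def by (rule dir_works[OF ddpsi[OF q]])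
  have Hd_sym: "Hd a b = Hd b a" for a b
    using schwarz[OF openV q dpsi_has Hd_has[of a] Hd_has[of b]] .
  have Hd_lin: "Hd b a = (\<Sum>i\<in>UNIV. b$i *\<^sub>R Hd (axis i 1) a)" for a b
  proof -
    have "((\<lambda>r. dir psi r ((\<lambda>_. b) r)) has_derivative
        (\<lambda>a. dir psi q ((\<lambda>_. 0) a) + (\<Sum>i\<in>UNIV. ((\<lambda>_. b) q)$i *\<^sub>R Hd (axis i 1) a))) (at q)"
      by (rule lin_field_deriv[OF openV q linV Hd_has]) simp_all
    then have "Hd b = (\<lambda>a. dir psi q 0 + (\<Sum>i\<in>UNIV. b$i *\<^sub>R Hd (axis i 1) a))"
      unfolding Hd_def by (simp add: dir_unique)
    then show ?thesis using linear_0[OF linV[OF q]] by simp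
  qed
  define K where "K a b = Hd b a + Gam p0 (P a) (P b)" for a b
  have K_sym: "K a b = K b a" for a b unfolding K_def using Hd_sym Gam_sym by metis
  define S where "S a b = (SOME s. \<exists>c. K a b = P s + c *\<^sub>R nn)" for a b
  define Om where "Om a b = (SOME c. K a b = P (S a b) + c *\<^sub>R nn)" for a b
  have KS: "K a b = P (S a b) + Om a b *\<^sub>R nn" for a b
  proof -
    have "\<exists>s c. K a b = P s + c *\<^sub>R nn" using spanP by blast
    then have "\<exists>c. K a b = P (S a b) + c *\<^sub>R nn" unfolding S_def by (rule someI_ex)
    then show ?thesis unfolding Om_def by (rule someI_ex)
  qed
  have S_sym: "S a b = S b a" and Om_sym: "Om a b = Om b a" for a b
    using uniq[of "S a b" "Om a b" "S b a" "Om b a"] KS[of a b] KS[of b a] K_sym[of a b] by auto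
  have dY: "(Y has_derivative dir Y q) (at q)" using XY q dir_works by blast
  have NN: "nablaN Gam psi X Y q = P (dir Y q (X q)) + K (X q) (Y q)"
  proof -
    have "((\<lambda>r. dir psi r (Y r)) has_derivative
        (\<lambda>a. dir psi q (dir Y q a) + (\<Sum>i\<in>UNIV. (Y q)$i *\<^sub>R Hd (axis i 1) a))) (at q)" (is ?der)
      by (rule lin_field_deriv[OF openV q linV Hd_has dY])
    note der = this
    have hl: "(\<Sum>i\<in>UNIV. (Y q)$i *\<^sub>R Hd (axis i 1) (X q)) = Hd (Y q) (X q)"
      by (rule Hd_lin[symmetric])
    from der have "dir (\<lambda>r. dir psi r (Y r)) q
        = (\<lambda>a. dir psi q (dir Y q a) + (\<Sum>i\<in>UNIV. (Y q)$i *\<^sub>R Hd (axis i 1) a))"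
      by (rule dir_unique)
    then have "dir (\<lambda>r. dir psi r (Y r)) q (X q) = P (dir Y q (X q)) + Hd (Y q) (X q)"
      unfolding P_def by (simp add: hl)
    then show ?thesis unfolding nablaN_def K_def P_def p0_def by simp
  qed
  have dec: "decomp g l l2 Gam psi X Y q = (dir Y q (X q) + S (X q) (Y q), Om (X q) (Y q))"
    unfolding decomp_def p0_def[symmetric] nn_def[symmetric] P_def[symmetric]
  proof (rule the_equality)
    show "nablaN Gam psi X Y q = P (fst (dir Y q (X q) + S (X q) (Y q), Om (X q) (Y q)))
        + snd (dir Y q (X q) + S (X q) (Y q), Om (X q) (Y q)) *\<^sub>R nn"
      using NN KS linP by (simp add: linear_add)
    fix vw assume "nablaN Gam psi X Y q = P (fst vw) + snd vw *\<^sub>R nn"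
    then have "P (fst vw) + snd vw *\<^sub>R nn = P (dir Y q (X q) + S (X q) (Y q)) + Om (X q) (Y q) *\<^sub>R nn"
      using NN KS linP by (simp add: linear_add add.assoc)
    then show "vw = (dir Y q (X q) + S (X q) (Y q), Om (X q) (Y q))"
      using uniq by (metis prod.collapse)
  qed
  have nablaS_eq: "nablaS g l l2 Gam psi X Y q = dir Y q (X q) + S (X q) (Y q)"
    unfolding nablaS_def dec by simp
  have Omega_eq: "Omega g l l2 Gam psi X Y q = Om (X q) (Y q)"
    unfolding Omega_def dec by simp
  have gpsi_has: "((\<lambda>r. g (psi r)) has_derivative (\<lambda>a. G' (P a))) (at q)"
    using has_derivative_compose[OF dpsi_has[OF q] dir_works[OF dg[OF p0U[unfolded p0_def]]]]
    unfolding G'_def P_def p0_def .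
  have Dh: "dir (\<lambda>r. hS g psi r b c) q a
      = bil (G' (P a)) (P b) (P c) + bil G0 (Hd b a) (P c) + bil G0 (P b) (Hd c a)" for a b c
  proof -
    have "((\<lambda>r. hS g psi r b c) has_derivative (\<lambda>h. bil (G' (P h)) (dir psi q b) (dir psi q c)
       + bil (g (psi q)) (Hd b h) (dir psi q c) + bil (g (psi q)) (dir psi q b) (Hd c h))) (at q)"
      unfolding hS_def by (rule bil_deriv[OF gpsi_has Hd_has Hd_has])
    then have "dir (\<lambda>r. hS g psi r b c) q = (\<lambda>h. bil (G' (P h)) (dir psi q b) (dir psi q c)
       + bil (g (psi q)) (Hd b h) (dir psi q c) + bil (g (psi q)) (dir psi q b) (Hd c h))" by (rule dir_unique)
    then show ?thesis unfolding P_def G0_def p0_def by simp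
  qed
  have dgc: "dir (\<lambda>q. bil (g q) Z W) p0 X = bil (G' X) Z W" for X Z W
  proof -
    have "((\<lambda>q. bil (g q) Z W) has_derivative (\<lambda>h. bil (G' h) Z W + bil (g p0) 0 W + bil (g p0) Z 0)) (at p0)"
      unfolding G'_def by (rule bil_deriv[OF dir_works[OF dg[OF p0U]] has_derivative_const has_derivative_const])
    then have "dir (\<lambda>q. bil (g q) Z W) p0 = (\<lambda>h. bil (G' h) Z W + bil (g p0) 0 W + bil (g p0) Z 0)" by (rule dir_unique)
    then show ?thesis by (simp add: bil_zero1 bil_zero2)
  qed
  have dlc: "dir (\<lambda>q. l q \<bullet> Z) p0 X = L' X \<bullet> Z" for X Z
  proof -
    have "((\<lambda>q. l q \<bullet> Z) has_derivative (\<lambda>h. l p0 \<bullet> 0 + L' h \<bullet> Z)) (at p0)"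
      unfolding L'_def by (rule has_derivative_inner[OF dir_works[OF dl[OF p0U]] has_derivative_const])
    then have "dir (\<lambda>q. l q \<bullet> Z) p0 = (\<lambda>h. l p0 \<bullet> 0 + L' h \<bullet> Z)" by (rule dir_unique)
    then show ?thesis by simp
  qed
  \<comment> \<open>Koszul argument\<close>
  define T where "T a b = S a b - U0 a b *\<^sub>R ls" for a b
  have hT1: "hq (T a b) c = hq (S a b) c - U0 a b * lp c" for a b c
    unfolding T_def using ls_prop by (simp add: linear_diff[OF lin_h1] linear_scale[OF lin_h1])
  have hT2: "hq b (T a c) = hq b (S a c) - U0 a c * lp b" for a b c
    unfolding T_def using ls_prop h_sym by (simp add: linear_diff[OF lin_h2] linear_scale[OF lin_h2])
  have hK1: "bil G0 (K a b) (P c) = hq (S a b) c" for a b c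
    unfolding KS by (simp add: bil_add1 bil_scale1 gn hq')
  have hK2: "bil G0 (P b) (K a c) = hq b (S a c)" for a b c
    unfolding KS by (simp add: bil_add2 bil_scale2 gn2 hq')
  have DhT: "dir (\<lambda>r. hS g psi r b c) q a = hq (T a b) c + hq b (T a c)" for a b c
  proof -
    have c1: "bil (G' (P a)) (P b) (P c) = bil G0 (Gam p0 (P a) (P b)) (P c) + bil G0 (P b) (Gam p0 (P a) (P c))
        - U0 a b * lp c - U0 a c * lp b"
      using circ1a[of "P b" "P c" "P a"] dgc U0' lp' by (simp add: algebra_simps)
    have "bil G0 (K a b) (P c) = bil G0 (Hd b a) (P c) + bil G0 (Gam p0 (P a) (P b)) (P c)"
      unfolding K_def by (simp add: bil_add1)
    moreover have "bil G0 (P b) (K a c) = bil G0 (P b) (Hd c a) + bil G0 (P b) (Gam p0 (P a) (P c))"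
      unfolding K_def by (simp add: bil_add2)
    ultimately show ?thesis using Dh[of b c a] c1 hT1[of a b c] hT2[of b a c] hK1[of a b c] hK2[of b a c]
      by linarith
  qed
  define D where "D a b = T a b - Gh q a b" for a b
  have T_sym: "T a b = T b a" for a b unfolding T_def by (simp add: S_sym[of a b] U0_sym[of a b])
  have D_sym: "D a b = D b a" for a b unfolding D_def by (simp add: T_sym[of a b] Ghq[of a b])
  have D_anti: "hq (D a b) c = - hq (D a c) b" for a b c
  proof -
    have l1: "dir (\<lambda>r. hS g psi r b c) q a - hq (Gh q a b) c - hq b (Gh q a c) = 0" by (rule LC)
    have l2: "dir (\<lambda>r. hS g psi r b c) q a = hq (T a b) c + hq b (T a c)" by (rule DhT)
    have l3: "hq (D a b) c = hq (T a b) c - hq (Gh q a b) c" unfolding D_def by (rule linear_diff[OF lin_h1])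
    have l4: "hq b (D a c) = hq b (T a c) - hq b (Gh q a c)" unfolding D_def by (rule linear_diff[OF lin_h2])
    have l5: "hq b (D a c) = hq (D a c) b" by (rule h_sym)
    show ?thesis using l1 l2 l3 l4 l5 by linarith
  qed
  have D0: "D a b = 0" for a b
  proof -
    have "hq (D a b) c = 0" for c
    proof -
      have "hq (D a b) c = - hq (D a c) b" by (rule D_anti)
      also have "\<dots> = - hq (D c a) b" by (simp add: D_sym)
      also have "\<dots> = hq (D c b) a" by (simp add: D_anti[of c a b])
      also have "\<dots> = hq (D b c) a" by (simp add: D_sym)
      also have "\<dots> = - hq (D b a) c" by (rule D_anti)
      also have "\<dots> = - hq (D a b) c" by (simp add: D_sym)
      finally show ?thesis by simp
    qed
    then show ?thesis using h_nd by blast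
  qed
  have GhT: "Gh q a b = T a b" for a b using D0[of a b] unfolding D_def by simp
  have C1: "nablah Gh X Y q = nablaS g l l2 Gam psi X Y q - Upar g l l2 psi q (X q) (Y q) *\<^sub>R lsharp g l psi q"
    unfolding nablah_def nablaS_eq GhT T_def U0_def ls_def by simp
  have C2: "nablaN Gam psi X Y q = dir psi q (nablah Gh X Y q + Upar g l l2 psi q (X q) (Y q) *\<^sub>R lsharp g l psi q)
            + Omega g l l2 Gam psi X Y q *\<^sub>R nfield g l l2 (psi q)"
    unfolding C1 Omega_eq nablaS_eq p0_def[symmetric] nn_def[symmetric] P_def[symmetric]
    using NN KS linP by (simp add: linear_add)
  have lpsi_has: "((\<lambda>r. l (psi r)) has_derivative (\<lambda>a. L' (P a))) (at q)"
    using has_derivative_compose[OF dpsi_has[OF q] dir_works[OF dl[OF p0U[unfolded p0_def]]]]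
    unfolding L'_def P_def p0_def .
  have dlp: "dir (\<lambda>r. lpar l psi r b) q a = L' (P a) \<bullet> P b + L0 \<bullet> Hd b a" for a b
  proof -
    have "((\<lambda>r. lpar l psi r b) has_derivative (\<lambda>h. l (psi q) \<bullet> Hd b h + L' (P h) \<bullet> dir psi q b)) (at q)"
      unfolding lpar_def by (rule has_derivative_inner[OF lpsi_has Hd_has])
    then have "dir (\<lambda>r. lpar l psi r b) q = (\<lambda>h. l (psi q) \<bullet> Hd b h + L' (P h) \<bullet> dir psi q b)" by (rule dir_unique)
    then show ?thesis unfolding P_def L0_def p0_def by simp
  qed
  have cov: "cov_lpar Gh l psi q a b = L' (P a) \<bullet> P b + L0 \<bullet> Hd b a - lp (T a b)" for a b
    unfolding cov_lpar_def dlp GhT lp_def ..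
  have lpT: "lp (T a b) = lp (S a b) - U0 a b * l2par g l psi q" for a b
    unfolding T_def l2par_def ls_def lp_def[symmetric]
    by (simp add: linear_diff[OF lin_lp] linear_scale[OF lin_lp])
  have LK: "L0 \<bullet> K a b = lp (S a b) + Om a b" for a b
    unfolding KS using ln lp' by (simp add: inner_add_right)
  have c2: "L' (P a) \<bullet> P b + L' (P b) \<bullet> P a = L0 \<bullet> Gam p0 (P a) (P b) + L0 \<bullet> Gam p0 (P b) (P a)
      - 2 * l2 p0 * U0 a b" for a b
    using circ2a[of "P b" "P a"] dlc U0' by (simp add: algebra_simps)
  have C3: "Om a b = (1/2) * (cov_lpar Gh l psi q a b + cov_lpar Gh l psi q b a)
      + (l2 p0 - l2par g l psi q) * U0 a b" for a b
  proof -
    have "L0 \<bullet> K a b = L0 \<bullet> Hd b a + L0 \<bullet> Gam p0 (P a) (P b)"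
      "L0 \<bullet> K b a = L0 \<bullet> Hd a b + L0 \<bullet> Gam p0 (P b) (P a)"
      unfolding K_def by (simp_all add: inner_add_right)
    then have e: "cov_lpar Gh l psi q a b + cov_lpar Gh l psi q b a
        = 2 * Om a b - 2 * l2 p0 * U0 a b + 2 * U0 a b * l2par g l psi q"
      using cov[of a b] cov[of b a] lpT[of a b] lpT[of b a] LK[of a b] LK[of b a] c2[of a b]
        S_sym[of a b] Om_sym[of a b] U0_sym[of a b]
      by (simp add: algebra_simps)
    then show ?thesis by (simp add: algebra_simps)
  qed
  show ?thesis
    using C1 C2 C3[of "X q" "Y q"] Omega_eq unfolding U0_def p0_def by simp
qed


end
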